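(* In the Com-IC model, if $q_{\mathcal{B}|\mathcal{A}}=q_{\mathcal{B}|\emptyset}$ then, for any fixed $\mathcal{B}$-seed set $S_\mathcal{B}$, the probability distribution of the final set of $\mathcal{B}$-adopted nodes is the same for every $\mathcal{A}$-seed set $S_\mathcal{A}$ (including $S_\mathcal{A}=\emptyset$). Symmetrically, if $q_{\mathcal{A}|\mathcal{B}}=q_{\mathcal{A}|\emptyset}$, the distribution of the final set of $\mathcal{A}$-adopted nodes does not depend on the $\mathcal{B}$-seed set.
   Context: Com-IC model. Let $G=(V,E,p)$ be a directed graph with $p:E\to[0,1]$ and $N^-(v)$ the in-neighbours of $v$. Two items $\mathcal{A},\mathcal{B}$; GAPs $\mathbf{Q}=(q_{\mathcal{A}|\emptyset},q_{\mathcal{A}|\mathcal{B}},q_{\mathcal{B}|\emptyset},q_{\mathcal{B}|\mathcal{A}})\in[0,1]^4$. Given seed sets $S_\mathcal{A},S_\mathcal{B}\subseteq V$, randomness: each edge $(u,v)$ independently live w.p. $p(u,v)$; each node $v$ independently draws $\alpha^v_\mathcal{A},\alpha^v_\mathcal{B}$ uniform on $[0,1]$, a uniformly random permutation $\pi_v$ of $N^-(v)$, and a fair coin $\tau_v\in\{\mathcal{A},\mathcal{B}\}$. For each item $X$ each node is $X$-idle, $X$-suspended, $X$-adopted or $X$-rejected; initially all idle. At step $0$ nodes of $S_\mathcal{A}$ become $\mathcal{A}$-adopted and nodes of $S_\mathcal{B}$ become $\mathcal{B}$-adopted (order for nodes in both given by $\tau_v$). At step $t\ge1$, $v$ is informed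 of $X$ by in-neighbour $u$ if $(u,v)$ is live and $u$ adopted $X$ at step $t-1$; informing in-neighbours are processed in order $\pi_v$ (an in-neighbour that adopted both items is processed for both, in its adoption order). When $v$ is informed of $X$ ($Y$ the other item) while $X$-idle: if $Y$-adopted, $v$ becomes $X$-adopted if $\alpha^v_X\le q_{X|Y}$, else $X$-rejected; otherwise $X$-adopted if $\alpha^v_X\le q_{X|\emptyset}$, else $X$-suspended. Informing a non-$X$-idle node of $X$ has no effect. Reconsideration: when an $X$-suspended node becomes $Y$-adopted, it becomes $X$-adopted if $\alpha^v_X\le q_{X|Y}$, else $X$-rejected. The process stops when nothing changes. *)

theory Defs
  imports "HOL-Probability.Probability" "HOL-Combinatorics.Multiset_Permutations"
begin

datatype item = IA | IB

fun other :: "item \<Rightarrow> item" where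
  "other IA = IB" | "other IB = IA"

datatype status = Idle | Suspended | Adopted | Rejected

text \<open>GAPs  Q = (q_{A|0}, q_{A|B}, q_{B|0}, q_{B|A}).
  gap Q X b is q_{X|Y} if b (the other item Y is adopted), else q_{X|0}.\<close>
fun gap :: "real \<times> real \<times> real \<times> real \<Rightarrow> item \<Rightarrow> bool \<Rightarrow> real" where
  "gap (qA0, qAB, qB0, qBA) IA b = (if b then qAB else qA0)"
| "gap (qA0, qAB, qB0, qBA) IB b = (if b then qBA else qB0)"

text \<open>Local state of one node: its status for each item, and the list of items
  it adopted during the current step (in adoption order).\<close>
type_synonym local_state = "(item \<Rightarrow> status) \<times> item list"

definition adopt :: "real \<times> real \<times> real \<times> real \<Rightarrow> (item \<Rightarrow> real) \<Rightarrow> item \<Rightarrow> local_state \<Rightarrow> local_state" where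
  "adopt Q \<alpha> X ls = (let (s, nv) = ls; Y = other X; s' = s(X := Adopted); nv' = nv @ [X] in
     if s Y = Suspended then
       (if \<alpha> Y \<le> gap Q Y True then (s'(Y := Adopted), nv' @ [Y]) else (s'(Y := Rejected), nv'))
     else (s', nv'))"

definition inform :: "real \<times> real \<times> real \<times> real \<Rightarrow> (item \<Rightarrow> real) \<Rightarrow> local_state \<Rightarrow> item \<Rightarrow> local_state" where
  "inform Q \<alpha> ls X = (let (s, nv) = ls; Y = other X in
     if s X = Idle then
       (if s Y = Adopted then
          (if \<alpha> X \<le> gap Q X True then adopt Q \<alpha> X ls else (s(X := Rejected), nv))
        else
          (if \<alpha> X \<le> gap Q X False then adopt Q \<alpha> X ls else (s(X := Suspended), nv)))
     else ls)"

text \<open>Global state: status of every node for every item, and the items adopted by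
  every node in the last step, in adoption order.\<close>
type_synonym 'v gstate = "('v \<Rightarrow> item \<Rightarrow> status) \<times> ('v \<Rightarrow> item list)"

text \<open>Randomness: live-edge indicator, permutations pi_v of the in-neighbours,
  coins tau_v (True = A first), thresholds alpha^v_X.\<close>
type_synonym 'v outcome = "((('v \<times> 'v) \<Rightarrow> bool) \<times> ('v \<Rightarrow> 'v list) \<times> ('v \<Rightarrow> bool)) \<times> ('v \<Rightarrow> item \<Rightarrow> real)"

definition init_state :: "'v set \<Rightarrow> 'v set \<Rightarrow> ('v \<Rightarrow> bool) \<Rightarrow> 'v gstate" where
  "init_state SA SB \<tau> =
     ((\<lambda>v X. if (X = IA \<and> v \<in> SA) \<or> (X = IB \<and> v \<in> SB) then Adopted else Idle),
      (\<lambda>v. if v \<in> SA \<and> v \<in> SB then (if \<tau> v then [IA, IB] else [IB, IA])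
           else if v \<in> SA then [IA] else if v \<in> SB then [IB] else []))"

definition informings :: "(('v \<times> 'v) \<Rightarrow> bool) \<Rightarrow> ('v \<Rightarrow> 'v list) \<Rightarrow> ('v \<Rightarrow> item list) \<Rightarrow> 'v \<Rightarrow> item list" where
  "informings live \<pi> nw v = concat (map (\<lambda>u. if live (u, v) then nw u else []) (\<pi> v))"

definition step :: "real \<times> real \<times> real \<times> real \<Rightarrow> 'v outcome \<Rightarrow> 'v gstate \<Rightarrow> 'v gstate" where
  "step Q \<omega> g = (let ((live, \<pi>, \<tau>), \<alpha>) = \<omega>; (st, nw) = g;
      node = (\<lambda>v. foldl (inform Q (\<alpha> v)) (st v, []) (informings live \<pi> nw v)) in
      ((\<lambda>v. fst (node v)), (\<lambda>v. snd (node v))))"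

definition final_state :: "real \<times> real \<times> real \<times> real \<Rightarrow> 'v set \<Rightarrow> 'v set \<Rightarrow> 'v outcome \<Rightarrow> 'v gstate" where
  "final_state Q SA SB \<omega> =
     (let s0 = init_state SA SB (snd (snd (fst \<omega>)));
          k = (LEAST k. step Q \<omega> ((step Q \<omega> ^^ k) s0) = (step Q \<omega> ^^ k) s0)
      in (step Q \<omega> ^^ k) s0)"

definition adopted_set :: "real \<times> real \<times> real \<times> real \<Rightarrow> 'v set \<Rightarrow> 'v set \<Rightarrow> item \<Rightarrow> 'v outcome \<Rightarrow> 'v set" where
  "adopted_set Q SA SB X \<omega> = {v. fst (final_state Q SA SB \<omega>) v X = Adopted}"

definition in_nbrs :: "('v \<times> 'v) set \<Rightarrow> 'v \<Rightarrow> 'v set" where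
  "in_nbrs E v = {u. (u, v) \<in> E}"

definition discrete_pmf :: "('v::finite \<times> 'v) set \<Rightarrow> ('v \<times> 'v \<Rightarrow> real)
    \<Rightarrow> ((('v \<times> 'v) \<Rightarrow> bool) \<times> ('v \<Rightarrow> 'v list) \<times> ('v \<Rightarrow> bool)) pmf" where
  "discrete_pmf E p =
     pair_pmf (Pi_pmf E False (\<lambda>e. bernoulli_pmf (p e)))
       (pair_pmf (Pi_pmf UNIV [] (\<lambda>v. pmf_of_set (permutations_of_set (in_nbrs E v))))
                 (Pi_pmf UNIV False (\<lambda>v. bernoulli_pmf (1/2))))"

definition alpha_measure :: "('v \<Rightarrow> item \<Rightarrow> real) measure" where
  "alpha_measure = PiM UNIV (\<lambda>_. PiM UNIV (\<lambda>_. uniform_measure lborel {0..1::real}))"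

definition comic_space :: "('v::finite \<times> 'v) set \<Rightarrow> ('v \<times> 'v \<Rightarrow> real) \<Rightarrow> 'v outcome measure" where
  "comic_space E p = measure_pmf (discrete_pmf E p) \<Otimes>\<^sub>M alpha_measure"

definition prob_adopted :: "('v::finite \<times> 'v) set \<Rightarrow> ('v \<times> 'v \<Rightarrow> real) \<Rightarrow> real \<times> real \<times> real \<times> real
    \<Rightarrow> 'v set \<Rightarrow> 'v set \<Rightarrow> item \<Rightarrow> 'v set \<Rightarrow> real" where
  "prob_adopted E p Q SA SB X T =
     measure (comic_space E p) {\<omega> \<in> space (comic_space E p). adopted_set Q SA SB X \<omega> = T}"

end

theory Submission
  imports Defs
begin

definition proj :: "status \<Rightarrow> nat" where
  "proj s = (if s = Idle then 0 else if s = Adopted then 1 else 2)"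

definition good :: "real \<times> real \<times> real \<times> real \<Rightarrow> (item \<Rightarrow> real) \<Rightarrow> item \<Rightarrow> (item \<Rightarrow> status) \<Rightarrow> bool" where
  "good Q \<alpha> X s \<longleftrightarrow> (s X = Suspended \<longrightarrow> \<not> \<alpha> X \<le> gap Q X False)"

lemma other_neq[simp]: "other X \<noteq> X" "X \<noteq> other X" by (cases X; simp)+
lemma other_other[simp]: "other (other X) = X" by (cases X; simp)
lemma item_cases: "Z = X \<or> Z = other X" by (cases Z; cases X) auto

lemma inform_X:
  assumes "gap Q X True = gap Q X False" "good Q \<alpha> X s" "inform Q \<alpha> (s,acc) X = (s1,acc1)"
  shows "proj (s1 X) = (if s X = Idle then (if \<alpha> X \<le> gap Q X False then 1 else 2) else proj (s X))
     \<and> (X \<in> set acc1 \<longleftrightarrow> X \<in> set acc \<or> (s X = Idle \<and> \<alpha> X \<le> gap Q X False)) \<and> good Q \<alpha> X s1"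
  using assms unfolding inform_def adopt_def good_def proj_def Let_def by (auto split: if_splits)

lemma inform_Y:
  assumes "gap Q X True = gap Q X False" "good Q \<alpha> X s" "inform Q \<alpha> (s,acc) (other X) = (s1,acc1)"
  shows "proj (s1 X) = proj (s X)
     \<and> (X \<in> set acc1 \<longleftrightarrow> X \<in> set acc) \<and> good Q \<alpha> X s1"
  using assms unfolding inform_def adopt_def good_def proj_def Let_def by (auto split: if_splits)

lemma inform_mono: "inform Q \<alpha> (s,acc) Z = (s1,acc1) \<Longrightarrow> (\<forall>X. s X = Adopted \<longrightarrow> s1 X = Adopted)
   \<and> (\<exists>new. acc1 = acc @ new \<and> (\<forall>X\<in>set new. s X \<noteq> Adopted \<and> s1 X = Adopted))"
  unfolding inform_def adopt_def Let_def by (auto split: if_splits)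

lemma proj0: "proj s = 0 \<longleftrightarrow> s = Idle" "proj s = 1 \<longleftrightarrow> s = Adopted" by (auto simp: proj_def)
lemma proj_Idle[simp]: "proj Idle = 0" by (simp add: proj_def)
lemma proj_nz: "s \<noteq> Idle \<Longrightarrow> proj s \<noteq> 0" by (simp add: proj_def)

lemma fold_X:
  assumes gq: "gap Q X True = gap Q X False"
  shows "good Q \<alpha> X s \<Longrightarrow> foldl (inform Q \<alpha>) (s,acc) xs = (s',acc') \<Longrightarrow>
    proj (s' X) = (if X \<in> set xs \<and> s X = Idle then (if \<alpha> X \<le> gap Q X False then 1 else 2) else proj (s X))
    \<and> (X \<in> set acc' \<longleftrightarrow> X \<in> set acc \<or> (X \<in> set xs \<and> s X = Idle \<and> \<alpha> X \<le> gap Q X False))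
    \<and> good Q \<alpha> X s'"
proof (induction xs arbitrary: s acc)
  case Nil thus ?case by simp
next
  case (Cons Z xs)
  obtain s1 acc1 where e: "inform Q \<alpha> (s,acc) Z = (s1,acc1)" by fastforce
  have f: "foldl (inform Q \<alpha>) (s1,acc1) xs = (s',acc')" using Cons.prems e by simp
  show ?case
  proof (cases "Z = X")
    case True
    have h: "proj (s1 X) = (if s X = Idle then (if \<alpha> X \<le> gap Q X False then 1 else 2) else proj (s X))
     \<and> (X \<in> set acc1 \<longleftrightarrow> X \<in> set acc \<or> (s X = Idle \<and> \<alpha> X \<le> gap Q X False)) \<and> good Q \<alpha> X s1"
      using inform_X[OF gq Cons.prems(1)] e True by blast
    note ih = Cons.IH[OF conjunct2[OF conjunct2[OF h]] f]
    show ?thesis using h ih True proj_nz by (auto simp: proj0 split: if_splits)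
  next
    case False
    hence Z: "Z = other X" using item_cases by blast
    have h: "proj (s1 X) = proj (s X) \<and> (X \<in> set acc1 \<longleftrightarrow> X \<in> set acc) \<and> good Q \<alpha> X s1"
      using inform_Y[OF gq Cons.prems(1)] e Z by blast
    note ih = Cons.IH[OF conjunct2[OF conjunct2[OF h]] f]
    show ?thesis using h ih False by (auto simp: proj0 split: if_splits)
  qed
qed

lemma fold_mono: "foldl (inform Q \<alpha>) (s,acc) xs = (s',acc') \<Longrightarrow> (\<forall>X. s X = Adopted \<longrightarrow> s' X = Adopted)
   \<and> (\<exists>new. acc' = acc @ new \<and> (\<forall>X\<in>set new. s X \<noteq> Adopted \<and> s' X = Adopted))"
proof (induction xs arbitrary: s acc)
  case Nil thus ?case by simp
next
  case (Cons Z xs)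
  obtain s1 acc1 where e: "inform Q \<alpha> (s,acc) Z = (s1,acc1)" by fastforce
  have f: "foldl (inform Q \<alpha>) (s1,acc1) xs = (s',acc')" using Cons.prems e by simp
  from inform_mono[OF e] obtain n1 where n1: "\<forall>X. s X = Adopted \<longrightarrow> s1 X = Adopted" "acc1 = acc @ n1"
     "\<forall>X\<in>set n1. s X \<noteq> Adopted \<and> s1 X = Adopted" by blast
  from Cons.IH[OF f] obtain n2 where n2: "\<forall>X. s1 X = Adopted \<longrightarrow> s' X = Adopted" "acc' = acc1 @ n2"
     "\<forall>X\<in>set n2. s1 X \<noteq> Adopted \<and> s' X = Adopted" by blast
  show ?case using n1 n2 by (intro conjI exI[of _ "n1 @ n2"]) auto
qed

lemma step_eq: "step Q ((live,\<pi>,\<tau>),\<alpha>) (st,nw) =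
   ((\<lambda>v. fst (foldl (inform Q (\<alpha> v)) (st v, []) (informings live \<pi> nw v))),
    (\<lambda>v. snd (foldl (inform Q (\<alpha> v)) (st v, []) (informings live \<pi> nw v))))"
  by (simp add: step_def Let_def)

lemma mem_informings: "X \<in> set (informings live \<pi> nw v) \<longleftrightarrow> (\<exists>u\<in>set (\<pi> v). live (u,v) \<and> X \<in> set (nw u))"
  by (auto simp: informings_def split: if_splits)

definition Rel :: "real \<times> real \<times> real \<times> real \<Rightarrow> ('v \<Rightarrow> item \<Rightarrow> real) \<Rightarrow> item \<Rightarrow> 'v gstate \<Rightarrow> 'v gstate \<Rightarrow> bool" where
  "Rel Q \<alpha> X g1 g2 \<longleftrightarrow> (\<forall>v. proj (fst g1 v X) = proj (fst g2 v X) \<and> (X \<in> set (snd g1 v) \<longleftrightarrow> X \<in> set (snd g2 v))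
      \<and> good Q (\<alpha> v) X (fst g1 v) \<and> good Q (\<alpha> v) X (fst g2 v))"

lemma Rel_step_v:
  assumes gq: "gap Q X True = gap Q X False"
    and R: "Rel Q \<alpha> X (st1,nw1) (st2,nw2)"
  shows "\<forall>v. proj (fst (foldl (inform Q (\<alpha> v)) (st1 v, []) (informings live \<pi> nw1 v)) X)
       = proj (fst (foldl (inform Q (\<alpha> v)) (st2 v, []) (informings live \<pi> nw2 v)) X)
     \<and> (X \<in> set (snd (foldl (inform Q (\<alpha> v)) (st1 v, []) (informings live \<pi> nw1 v)))
        \<longleftrightarrow> X \<in> set (snd (foldl (inform Q (\<alpha> v)) (st2 v, []) (informings live \<pi> nw2 v))))
      \<and> good Q (\<alpha> v) X (fst (foldl (inform Q (\<alpha> v)) (st1 v, []) (informings live \<pi> nw1 v)))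
      \<and> good Q (\<alpha> v) X (fst (foldl (inform Q (\<alpha> v)) (st2 v, []) (informings live \<pi> nw2 v)))"
proof
    fix v
    have r: "proj (st1 v X) = proj (st2 v X)" "\<And>u. X \<in> set (nw1 u) \<longleftrightarrow> X \<in> set (nw2 u)"
      "good Q (\<alpha> v) X (st1 v)" "good Q (\<alpha> v) X (st2 v)" using R by (auto simp: Rel_def)
    obtain s1 a1 where e1: "foldl (inform Q (\<alpha> v)) (st1 v, []) (informings live \<pi> nw1 v) = (s1,a1)" by fastforce
    obtain s2 a2 where e2: "foldl (inform Q (\<alpha> v)) (st2 v, []) (informings live \<pi> nw2 v) = (s2,a2)" by fastforce
    have m: "X \<in> set (informings live \<pi> nw1 v) \<longleftrightarrow> X \<in> set (informings live \<pi> nw2 v)"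
      using r(2) by (simp add: mem_informings)
    have i: "st1 v X = Idle \<longleftrightarrow> st2 v X = Idle" using r(1) by (metis proj0(1))
    note h1 = fold_X[OF gq r(3) e1] and h2 = fold_X[OF gq r(4) e2]
    show "proj (fst (foldl (inform Q (\<alpha> v)) (st1 v, []) (informings live \<pi> nw1 v)) X)
       = proj (fst (foldl (inform Q (\<alpha> v)) (st2 v, []) (informings live \<pi> nw2 v)) X)
     \<and> (X \<in> set (snd (foldl (inform Q (\<alpha> v)) (st1 v, []) (informings live \<pi> nw1 v)))
        \<longleftrightarrow> X \<in> set (snd (foldl (inform Q (\<alpha> v)) (st2 v, []) (informings live \<pi> nw2 v))))
      \<and> good Q (\<alpha> v) X (fst (foldl (inform Q (\<alpha> v)) (st1 v, []) (informings live \<pi> nw1 v)))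
      \<and> good Q (\<alpha> v) X (fst (foldl (inform Q (\<alpha> v)) (st2 v, []) (informings live \<pi> nw2 v)))"
      unfolding e1 e2 using h1 h2 m i r(1) by simp
qed

lemma Rel_step:
  assumes gq: "gap Q X True = gap Q X False" and R: "Rel Q \<alpha> X g1 g2"
  shows "Rel Q \<alpha> X (step Q ((live,\<pi>,\<tau>),\<alpha>) g1) (step Q ((live,\<pi>,\<tau>),\<alpha>) g2)"
proof -
  obtain st1 nw1 where g1: "g1 = (st1,nw1)" by fastforce
  obtain st2 nw2 where g2: "g2 = (st2,nw2)" by fastforce
  show ?thesis unfolding g1 g2 step_eq Rel_def fst_conv snd_conv
    using Rel_step_v[OF gq R[unfolded g1 g2], of live \<pi>] by blast
qed

definition cnt :: "'v gstate \<Rightarrow> nat" where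
  "cnt g = card {p \<in> (UNIV::'v set) \<times> {IA,IB}. fst g (fst p) (snd p) = Adopted}"

lemma step_fix: "(\<forall>v. nw v = []) \<Longrightarrow> step Q ((live,\<pi>,\<tau>),\<alpha>) (st,nw) = (st,nw)"
proof -
  assume a: "\<forall>v. nw v = []"
  hence "nw = (\<lambda>_. [])" by auto
  hence "informings live \<pi> nw v = []" for v by (simp add: informings_def)
  thus ?thesis by (simp add: step_eq fun_eq_iff a)
qed

lemma step_prog:
  assumes "step Q ((live,\<pi>,\<tau>),\<alpha>) (st,nw) = (st',nw')"
  shows "(\<forall>v X. st v X = Adopted \<longrightarrow> st' v X = Adopted) \<and>
     (\<forall>v. nw' v \<noteq> [] \<longrightarrow> (\<exists>X. st v X \<noteq> Adopted \<and> st' v X = Adopted))"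
proof (intro conjI allI impI)
  fix v
  obtain s a where e: "foldl (inform Q (\<alpha> v)) (st v, []) (informings live \<pi> nw v) = (s,a)" by fastforce
  have "st' = (\<lambda>v. fst (foldl (inform Q (\<alpha> v)) (st v, []) (informings live \<pi> nw v)))"
       "nw' = (\<lambda>v. snd (foldl (inform Q (\<alpha> v)) (st v, []) (informings live \<pi> nw v)))"
    using assms by (simp_all add: step_eq)
  hence st': "st' v = s" "nw' v = a" using e by simp_all
  note fm = fold_mono[OF e]
  { fix X assume "st v X = Adopted" thus "st' v X = Adopted" using fm st' by auto }
  { assume "nw' v \<noteq> []"
    then obtain X where "X \<in> set a" using st' by (cases a) auto
    thus "\<exists>X. st v X \<noteq> Adopted \<and> st' v X = Adopted" using fm st' by auto }
qed

lemma cnt_incr: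
  fixes g :: "'v::finite gstate"
  assumes "\<not> (\<forall>v. snd (step Q ((live,\<pi>,\<tau>),\<alpha>) g) v = [])"
  shows "cnt g < cnt (step Q ((live,\<pi>,\<tau>),\<alpha>) g)"
proof -
  obtain st nw where g: "g = (st,nw)" by fastforce
  obtain st' nw' where g': "step Q ((live,\<pi>,\<tau>),\<alpha>) g = (st',nw')" by fastforce
  note sp = step_prog[OF g'[unfolded g]]
  obtain v where "nw' v \<noteq> []" using assms g' by auto
  then obtain X where X: "st v X \<noteq> Adopted" "st' v X = Adopted" using sp by blast
  have XI: "X \<in> {IA,IB}" by (cases X) auto
  have "{p \<in> (UNIV::'v set) \<times> {IA,IB}. st (fst p) (snd p) = Adopted}
      \<subset> {p \<in> (UNIV::'v set) \<times> {IA,IB}. st' (fst p) (snd p) = Adopted}"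
  proof -
    have "{p \<in> (UNIV::'v set) \<times> {IA,IB}. st (fst p) (snd p) = Adopted}
      \<subseteq> {p \<in> (UNIV::'v set) \<times> {IA,IB}. st' (fst p) (snd p) = Adopted}" using sp by auto
    moreover have "(v,X) \<in> {p \<in> (UNIV::'v set) \<times> {IA,IB}. st' (fst p) (snd p) = Adopted}
       - {p \<in> (UNIV::'v set) \<times> {IA,IB}. st (fst p) (snd p) = Adopted}" using X XI by auto
    ultimately show ?thesis by blast
  qed
  hence "card {p \<in> (UNIV::'v set) \<times> {IA,IB}. st (fst p) (snd p) = Adopted}
      < card {p \<in> (UNIV::'v set) \<times> {IA,IB}. st' (fst p) (snd p) = Adopted}"
    by (intro psubset_card_mono) auto
  thus ?thesis unfolding cnt_def g using g'[unfolded g] by simp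
qed

lemma cnt_le: "cnt (g :: 'v::finite gstate) \<le> card ((UNIV::'v set) \<times> {IA,IB})"
  unfolding cnt_def by (intro card_mono) auto

lemma terminates:
  fixes s :: "'v::finite gstate"
  shows "\<exists>k. step Q ((live,\<pi>,\<tau>),\<alpha>) ((step Q ((live,\<pi>,\<tau>),\<alpha>) ^^ k) s) = (step Q ((live,\<pi>,\<tau>),\<alpha>) ^^ k) s"
proof (rule ccontr)
  define F where "F = step Q ((live,\<pi>,\<tau>),\<alpha>)"
  assume "\<not> ?thesis"
  hence nf: "F ((F ^^ k) s) \<noteq> (F ^^ k) s" for k unfolding F_def by blast
  have inc: "cnt ((F ^^ k) s) < cnt ((F ^^ Suc k) s)" for k
  proof -
    have "\<not> (\<forall>v. snd (F ((F ^^ k) s)) v = [])"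
    proof
      assume a: "\<forall>v. snd (F ((F ^^ k) s)) v = []"
      obtain st nw where e: "F ((F ^^ k) s) = (st,nw)" by fastforce
      have nw: "\<forall>v. nw v = []" using a e by simp
      have "F (st,nw) = (st,nw)" unfolding F_def by (rule step_fix[OF nw])
      hence "F (F ((F ^^ k) s)) = F ((F ^^ k) s)" using e by simp
      thus False using nf[of "Suc k"] by simp
    qed
    thus ?thesis using cnt_incr unfolding F_def by simp
  qed
  have "k \<le> cnt ((F ^^ k) s)" for k
  proof (induction k)
    case (Suc k) thus ?case using inc[of k] by simp
  qed simp
  from this[of "Suc (card ((UNIV::'v set) \<times> {IA,IB}))"] cnt_le show False
    by (metis not_less_eq_eq)
qed

lemma funpow_fix: "f x = x \<Longrightarrow> (f ^^ j) x = x" by (induction j) auto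

lemma core:
  fixes \<omega> :: "'v::finite outcome"
  assumes gq: "gap Q X True = gap Q X False"
    and R0: "Rel Q (snd \<omega>) X (init_state SA SB (snd (snd (fst \<omega>)))) (init_state SA' SB' (snd (snd (fst \<omega>))))"
  shows "adopted_set Q SA SB X \<omega> = adopted_set Q SA' SB' X \<omega>"
proof -
  obtain live \<pi> \<tau> \<alpha> where w: "\<omega> = ((live,\<pi>,\<tau>),\<alpha>)" by (metis prod.collapse)
  define F where "F = step Q ((live,\<pi>,\<tau>),\<alpha>)"
  define s1 where "s1 = init_state SA SB \<tau>"
  define s2 where "s2 = init_state SA' SB' \<tau>"
  have Rk: "Rel Q \<alpha> X ((F^^k) s1) ((F^^k) s2)" for k
  proof (induction k)
    case 0 thus ?case using R0 unfolding w s1_def s2_def by simp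
  next
    case (Suc k) thus ?case using Rel_step[OF gq] unfolding F_def by simp
  qed
  have Ak: "{v. fst ((F^^k) s1) v X = Adopted} = {v. fst ((F^^k) s2) v X = Adopted}" for k
    using Rk[of k] unfolding Rel_def by (auto simp: proj0(2)[symmetric])
  define k1 where "k1 = (LEAST k. F ((F ^^ k) s1) = (F ^^ k) s1)"
  define k2 where "k2 = (LEAST k. F ((F ^^ k) s2) = (F ^^ k) s2)"
  have f1: "F ((F ^^ k1) s1) = (F ^^ k1) s1" unfolding k1_def
    by (rule LeastI_ex) (use terminates in \<open>simp add: F_def\<close>)
  have f2: "F ((F ^^ k2) s2) = (F ^^ k2) s2" unfolding k2_def
    by (rule LeastI_ex) (use terminates in \<open>simp add: F_def\<close>)
  define m where "m = max k1 k2"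
  have m1: "(F ^^ m) s1 = (F ^^ k1) s1"
  proof -
    have "m = (m - k1) + k1" unfolding m_def by simp
    hence "(F ^^ m) s1 = (F ^^ (m - k1)) ((F ^^ k1) s1)" by (metis comp_apply funpow_add)
    thus ?thesis using funpow_fix[of F, OF f1] by simp
  qed
  have m2: "(F ^^ m) s2 = (F ^^ k2) s2"
  proof -
    have "m = (m - k2) + k2" unfolding m_def by simp
    hence "(F ^^ m) s2 = (F ^^ (m - k2)) ((F ^^ k2) s2)" by (metis comp_apply funpow_add)
    thus ?thesis using funpow_fix[of F, OF f2] by simp
  qed
  have fs1: "final_state Q SA SB \<omega> = (F ^^ k1) s1"
    unfolding final_state_def w Let_def F_def s1_def k1_def by simp
  have fs2: "final_state Q SA' SB' \<omega> = (F ^^ k2) s2"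
    unfolding final_state_def w Let_def F_def s2_def k2_def by simp
  show ?thesis unfolding adopted_set_def fs1 fs2 using Ak[of m] m1 m2 by simp
qed

lemma init_B: "Rel Q \<alpha> IB (init_state SA SB \<tau>) (init_state SA' SB \<tau>)"
  unfolding Rel_def init_state_def good_def by (simp split: if_split)

lemma init_A: "Rel Q \<alpha> IA (init_state SA SB \<tau>) (init_state SA SB' \<tau>)"
  unfolding Rel_def init_state_def good_def by (simp split: if_split)

theorem lemma3:
  fixes E :: "('v::finite \<times> 'v) set" and p :: "'v \<times> 'v \<Rightarrow> real"
    and qA0 qAB qB0 qBA :: real
  assumes "\<forall>e\<in>E. 0 \<le> p e \<and> p e \<le> 1"
    and "qA0 \<in> {0..1}" "qAB \<in> {0..1}" "qB0 \<in> {0..1}" "qBA \<in> {0..1}"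
  shows "(qBA = qB0 \<longrightarrow> (\<forall>SB SA SA' T.
            prob_adopted E p (qA0, qAB, qB0, qBA) SA SB IB T
          = prob_adopted E p (qA0, qAB, qB0, qBA) SA' SB IB T))
       \<and> (qAB = qA0 \<longrightarrow> (\<forall>SA SB SB' T.
            prob_adopted E p (qA0, qAB, qB0, qBA) SA SB IA T
          = prob_adopted E p (qA0, qAB, qB0, qBA) SA SB' IA T))"
proof (intro conjI impI allI)
  fix SB SA SA' T assume q: "qBA = qB0"
  have "adopted_set (qA0, qAB, qB0, qBA) SA SB IB \<omega> = adopted_set (qA0, qAB, qB0, qBA) SA' SB IB \<omega>"
    for \<omega> :: "'v outcome"
    by (rule core) (simp_all add: q init_B init_A)
  thus "prob_adopted E p (qA0, qAB, qB0, qBA) SA SB IB T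
          = prob_adopted E p (qA0, qAB, qB0, qBA) SA' SB IB T"
    unfolding prob_adopted_def by simp
next
  fix SA SB SB' T assume q: "qAB = qA0"
  have "adopted_set (qA0, qAB, qB0, qBA) SA SB IA \<omega> = adopted_set (qA0, qAB, qB0, qBA) SA SB' IA \<omega>"
    for \<omega> :: "'v outcome"
    by (rule core) (simp_all add: q init_B init_A)
  thus "prob_adopted E p (qA0, qAB, qB0, qBA) SA SB IA T
          = prob_adopted E p (qA0, qAB, qB0, qBA) SA SB' IA T"
    unfolding prob_adopted_def by simp
qed

end
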